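(* Let $\mathcal A$ be an infinite alphabet and $\Delta$ a right-infinite word over $\mathcal A$ in which every letter $a\in\mathcal A$ occurs infinitely many times, and let $\omega=\psi(\Delta)$. Then for every $a\in\mathcal A$ the set $(a\omega)|_a=\{n\in\mathbb N:(a\omega)_n=a\}$ is a central set. Consequently $\{\omega|_a+1\}_{a\in\mathcal A}$ is an infinite partition of $\mathbb N\setminus\{0\}$ into central sets.
   Context: $\mathbb N=\{0,1,2,\dots\}$. For a finite word $w$, $w^{(+)}$ is the shortest palindrome having $w$ as a prefix; the iterated palindromic closure $\psi$ is defined by $\psi(\varepsilon)=\varepsilon$, $\psi(wa)=(\psi(w)a)^{(+)}$, and extended to infinite words by $\psi(\Delta)=\lim_n\psi(\Delta_0\cdots\Delta_n)$. For an infinite word $x$ and letter $a$, $x|_a=\{n\in\mathbb N:x_n=a\}$, $a\omega$ denotes the word $\omega$ preceded by the letter $a$, and $B+1=\{b+1:b\in B\}$. $\beta\mathbb N$ is the set of ultrafilters on $\mathbb N$ with addition $A\in p+q$ iff $\{n:A-n\in p\}\in q$ ($A-n=\{m:m+n\in A\}$); a minimal idempotent is a non-principal $p$ with $p+p=p$ in the smallest two-sided ideal of $\beta\mathbb N$; a set is central if it belongs to some minimal idempotent. *)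

theory Defs
  imports "HOL-Library.Sublist"
begin

definition is_pal :: "'a list \<Rightarrow> bool" where
  "is_pal w \<longleftrightarrow> rev w = w"

definition pal_closure :: "'a list \<Rightarrow> 'a list" where
  "pal_closure w = (ARG_MIN length p. is_pal p \<and> prefix w p)"

definition psi_fin :: "'a list \<Rightarrow> 'a list" where
  "psi_fin w = foldl (\<lambda>u a. pal_closure (u @ [a])) [] w"

definition psi_inf :: "(nat \<Rightarrow> 'a) \<Rightarrow> nat \<Rightarrow> 'a" where
  "psi_inf D k = (THE c. \<forall>\<^sub>F n in sequentially.
      k < length (psi_fin (map D [0..<Suc n])) \<and> psi_fin (map D [0..<Suc n]) ! k = c)"

definition prepend :: "'a \<Rightarrow> (nat \<Rightarrow> 'a) \<Rightarrow> nat \<Rightarrow> 'a" where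
  "prepend a x = (\<lambda>n. case n of 0 \<Rightarrow> a | Suc m \<Rightarrow> x m)"

definition occ :: "(nat \<Rightarrow> 'a) \<Rightarrow> 'a \<Rightarrow> nat set" where
  "occ x a = {n. x n = a}"

definition is_ultrafilter :: "nat set set \<Rightarrow> bool" where
  "is_ultrafilter U \<longleftrightarrow>
     {} \<notin> U \<and> UNIV \<in> U \<and>
     (\<forall>A B. A \<in> U \<longrightarrow> A \<subseteq> B \<longrightarrow> B \<in> U) \<and>
     (\<forall>A B. A \<in> U \<longrightarrow> B \<in> U \<longrightarrow> A \<inter> B \<in> U) \<and>
     (\<forall>A. A \<in> U \<or> - A \<in> U)"

definition betaN :: "nat set set set" where
  "betaN = {U. is_ultrafilter U}"

definition principal_uf :: "nat \<Rightarrow> nat set set" where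
  "principal_uf n = {A. n \<in> A}"

definition set_minus_nat :: "nat set \<Rightarrow> nat \<Rightarrow> nat set" where
  "set_minus_nat A n = {m. m + n \<in> A}"

definition uf_plus :: "nat set set \<Rightarrow> nat set set \<Rightarrow> nat set set" where
  "uf_plus p q = {A. {n. set_minus_nat A n \<in> p} \<in> q}"

definition two_sided_ideal :: "nat set set set \<Rightarrow> bool" where
  "two_sided_ideal I \<longleftrightarrow> I \<noteq> {} \<and> I \<subseteq> betaN \<and>
     (\<forall>p\<in>betaN. \<forall>q\<in>I. uf_plus p q \<in> I \<and> uf_plus q p \<in> I)"

definition K_betaN :: "nat set set set" where
  "K_betaN = \<Inter> {I. two_sided_ideal I}"

definition minimal_idempotent :: "nat set set \<Rightarrow> bool" where
  "minimal_idempotent p \<longleftrightarrow> p \<in> betaN \<and> (\<forall>n. p \<noteq> principal_uf n) \<and>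
     uf_plus p p = p \<and> p \<in> K_betaN"

definition central :: "nat set \<Rightarrow> bool" where
  "central A \<longleftrightarrow> (\<exists>p. minimal_idempotent p \<and> A \<in> p)"

end

theory Submission
  imports Defs "HOL-Library.Infinite_Set"
begin

lemma Zorn_min:
  assumes "\<A> \<noteq> {}"
    and ch: "\<And>\<C>. \<C> \<noteq> {} \<Longrightarrow> \<C> \<subseteq> \<A> \<Longrightarrow> (\<forall>X\<in>\<C>. \<forall>Y\<in>\<C>. X \<subseteq> Y \<or> Y \<subseteq> X) \<Longrightarrow> \<Inter>\<C> \<in> \<A>"
  shows "\<exists>M\<in>\<A>. \<forall>X\<in>\<A>. X \<subseteq> M \<longrightarrow> X = M"
proof -
  have "\<exists>M\<in>uminus ` \<A>. \<forall>X\<in>uminus ` \<A>. M \<subseteq> X \<longrightarrow> X = M"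
  proof (rule subset_Zorn_nonempty)
    show "uminus ` \<A> \<noteq> {}" using assms(1) by auto
  next
    fix \<C> assume ne: "\<C> \<noteq> {}" and c: "subset.chain (uminus ` \<A>) \<C>"
    have sub: "uminus ` \<C> \<subseteq> \<A>" using c unfolding subset.chain_def by auto
    have "\<forall>X\<in>uminus ` \<C>. \<forall>Y\<in>uminus ` \<C>. X \<subseteq> Y \<or> Y \<subseteq> X"
      proof (intro ballI)
      fix X Y assume "X \<in> uminus ` \<C>" "Y \<in> uminus ` \<C>"
      then obtain X' Y' where "X' \<in> \<C>" "Y' \<in> \<C>" "X = - X'" "Y = - Y'" by auto
      moreover have "X' \<subseteq> Y' \<or> Y' \<subseteq> X'" using c \<open>X' \<in> \<C>\<close> \<open>Y' \<in> \<C>\<close> unfolding subset.chain_def by blast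
      ultimately show "X \<subseteq> Y \<or> Y \<subseteq> X" by auto
    qed
    then have "\<Inter>(uminus ` \<C>) \<in> \<A>" using ch[of "uminus ` \<C>"] ne sub by auto
    moreover have "\<Union>\<C> = - \<Inter>(uminus ` \<C>)" by auto
    ultimately show "\<Union>\<C> \<in> uminus ` \<A>" by (metis image_eqI)
  qed
  then obtain M where M: "M \<in> \<A>" "\<forall>X\<in>\<A>. -M \<subseteq> -X \<longrightarrow> -X = -M" by auto
  then show ?thesis by (metis compl_le_compl_iff double_compl)
qed

lemma uf_props:
  assumes "is_ultrafilter U"
  shows "{} \<notin> U" "UNIV \<in> U" "A \<in> U \<Longrightarrow> A \<subseteq> B \<Longrightarrow> B \<in> U"
    "A \<in> U \<Longrightarrow> B \<in> U \<Longrightarrow> A \<inter> B \<in> U" "A \<in> U \<or> - A \<in> U"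
  using assms unfolding is_ultrafilter_def by blast+

lemma uf_compl: "is_ultrafilter U \<Longrightarrow> (- A \<in> U) \<longleftrightarrow> A \<notin> U"
  by (metis Compl_disjoint uf_props(1,4,5))

lemma uf_eq:
  assumes U: "is_ultrafilter U" and V: "is_ultrafilter V" and UV: "U \<subseteq> V"
  shows "U = V"
proof (intro subset_antisym subsetI)
  fix A assume "A \<in> V"
  show "A \<in> U"
  proof (rule ccontr)
    assume "A \<notin> U"
    then have "- A \<in> V" using uf_props(5)[OF U, of A] UV by auto
    then show False using uf_compl[OF V, of A] \<open>A \<in> V\<close> by auto
  qed
qed (use UV in auto)

lemma uf_Inter:
  assumes "is_ultrafilter U" "finite S" "S \<subseteq> U"
  shows "\<Inter>S \<in> U"
  using assms(2,3)
proof (induction S rule: finite_induct)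
  case empty then show ?case using uf_props(2)[OF assms(1)] by simp
next
  case (insert x F) then show ?case using uf_props(4)[OF assms(1)] by simp
qed

definition fip :: "nat set set \<Rightarrow> bool" where
  "fip F \<longleftrightarrow> (\<forall>S. finite S \<longrightarrow> S \<subseteq> F \<longrightarrow> \<Inter>S \<noteq> {})"

lemma fip_ultra:
  assumes "fip F"
  shows "\<exists>U. is_ultrafilter U \<and> F \<subseteq> U"
proof -
  let ?A = "{G. F \<subseteq> G \<and> fip G}"
  have "\<exists>M\<in>?A. \<forall>X\<in>?A. M \<subseteq> X \<longrightarrow> X = M"
  proof (rule subset_Zorn_nonempty)
    show "?A \<noteq> {}" using assms by auto
  next
    fix \<C> assume ne: "\<C> \<noteq> {}" and c: "subset.chain ?A \<C>"
    have "F \<subseteq> \<Union>\<C>" using ne c unfolding subset.chain_def by blast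
    moreover have "fip (\<Union>\<C>)" unfolding fip_def
    proof (intro allI impI)
      fix S assume fS: "finite S" and S: "S \<subseteq> \<Union>\<C>"
      have "\<exists>G\<in>\<C>. S \<subseteq> G"
      proof (cases "S = {}")
        case True then show ?thesis using ne by auto
      next
        case False
        have ch: "subset.chain UNIV \<C>" using c unfolding subset.chain_def by auto
        show ?thesis using finite_subset_Union_chain[OF fS S _ ch] ne
          by (metis empty_subsetI equals0I)
      qed
      then obtain G where "G \<in> \<C>" "S \<subseteq> G" by auto
      then show "\<Inter>S \<noteq> {}" using c fS unfolding subset.chain_def fip_def by auto
    qed
    ultimately show "\<Union>\<C> \<in> ?A" by auto
  qed
  then obtain M where M: "F \<subseteq> M" "fip M" and max: "\<forall>X. F \<subseteq> X \<and> fip X \<longrightarrow> M \<subseteq> X \<longrightarrow> X = M"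
    by auto
  have fipM: "\<Inter>S \<noteq> {}" if "finite S" "S \<subseteq> M" for S
    using M(2) that unfolding fip_def by auto
  have add: "A \<in> M" if "fip (insert A M)" for A
    using max[rule_format, of "insert A M"] M that by auto
  have "is_ultrafilter M" unfolding is_ultrafilter_def
  proof (intro conjI allI impI)
    show "{} \<notin> M" using M(2) unfolding fip_def by (metis Inter_insert empty_subsetI finite.emptyI finite.insertI inf_bot_left insert_subset)
  next
    show "UNIV \<in> M"
    proof (rule add, unfold fip_def, intro allI impI)
      fix S assume "finite S" "S \<subseteq> insert UNIV M"
      then have "finite (S - {UNIV})" "S - {UNIV} \<subseteq> M" by auto
      then have "\<Inter>(S - {UNIV}) \<noteq> {}" by (rule fipM)
      moreover have "\<Inter>(S - {UNIV}) = \<Inter>S" by auto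
      ultimately show "\<Inter>S \<noteq> {}" by auto
    qed
  next
    fix A B assume "A \<in> M" "A \<subseteq> B"
    show "B \<in> M"
    proof (rule add, unfold fip_def, intro allI impI)
      fix S assume "finite S" "S \<subseteq> insert B M"
      then have "finite (insert A (S - {B}))" "insert A (S - {B}) \<subseteq> M" using \<open>A \<in> M\<close> by auto
      then have "\<Inter>(insert A (S - {B})) \<noteq> {}" by (rule fipM)
      moreover have "\<Inter>(insert A (S - {B})) \<subseteq> \<Inter>S" using \<open>A \<subseteq> B\<close> by auto
      ultimately show "\<Inter>S \<noteq> {}" by auto
    qed
  next
    fix A B assume "A \<in> M" "B \<in> M"
    show "A \<inter> B \<in> M"
    proof (rule add, unfold fip_def, intro allI impI)
      fix S assume "finite S" "S \<subseteq> insert (A \<inter> B) M"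
      then have "finite (insert A (insert B (S - {A \<inter> B})))" "insert A (insert B (S - {A \<inter> B})) \<subseteq> M"
        using \<open>A \<in> M\<close> \<open>B \<in> M\<close> by auto
      then have "\<Inter>(insert A (insert B (S - {A \<inter> B}))) \<noteq> {}" by (rule fipM)
      moreover have "\<Inter>(insert A (insert B (S - {A \<inter> B}))) \<subseteq> \<Inter>S" by auto
      ultimately show "\<Inter>S \<noteq> {}" by auto
    qed
  next
    fix A
    show "A \<in> M \<or> - A \<in> M"
    proof (rule ccontr)
      assume "\<not> (A \<in> M \<or> - A \<in> M)"
      then have "\<not> fip (insert A M)" "\<not> fip (insert (-A) M)" using add by blast+
      then obtain S1 S2 where S1: "finite S1" "S1 \<subseteq> insert A M" "\<Inter>S1 = {}"
        and S2: "finite S2" "S2 \<subseteq> insert (-A) M" "\<Inter>S2 = {}"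
        unfolding fip_def by blast
      have "finite ((S1 - {A}) \<union> (S2 - {-A}))" "(S1 - {A}) \<union> (S2 - {-A}) \<subseteq> M" using S1 S2 by auto
      then have "\<Inter>((S1 - {A}) \<union> (S2 - {-A})) \<noteq> {}" by (rule fipM)
      then obtain x where x: "x \<in> \<Inter>((S1 - {A}) \<union> (S2 - {-A}))" by auto
      show False
      proof (cases "x \<in> A")
        case True
        then have "x \<in> \<Inter>S1" using x by auto
        then show False using S1 by auto
      next
        case False
        then have "x \<in> \<Inter>S2" using x by auto
        then show False using S2 by auto
      qed
    qed
  qed
  then show ?thesis using M by auto
qed

lemma betaN_uf: "p \<in> betaN \<longleftrightarrow> is_ultrafilter p" by (simp add: betaN_def)

lemma set_minus_nat_iff[simp]: "m \<in> set_minus_nat A n \<longleftrightarrow> m + n \<in> A"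
  by (simp add: set_minus_nat_def)

lemma uf_plus_iff: "A \<in> uf_plus p q \<longleftrightarrow> {n. set_minus_nat A n \<in> p} \<in> q"
  by (simp add: uf_plus_def)

lemma set_minus_nat_twice: "set_minus_nat (set_minus_nat A n) m = set_minus_nat A (m + n)"
  by (auto simp: set_minus_nat_def add.assoc)

lemma uf_plus_assoc: "uf_plus (uf_plus p q) r = uf_plus p (uf_plus q r)"
proof -
  have "{m. set_minus_nat (set_minus_nat A n) m \<in> p} = set_minus_nat {m. set_minus_nat A m \<in> p} n" for A n
    by (simp add: set_minus_nat_twice) (simp add: set_minus_nat_def)
  then show ?thesis unfolding uf_plus_def by auto
qed

lemma uf_plus_closed:
  assumes p: "p \<in> betaN" and q: "q \<in> betaN"
  shows "uf_plus p q \<in> betaN"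
proof -
  have P: "is_ultrafilter p" and Q: "is_ultrafilter q" using p q by (auto simp: betaN_def)
  have e: "set_minus_nat {} n = {}" "set_minus_nat UNIV n = UNIV" for n by (auto simp: set_minus_nat_def)
  have "is_ultrafilter (uf_plus p q)" unfolding is_ultrafilter_def uf_plus_iff
  proof (intro conjI allI impI)
    show "{n. set_minus_nat {} n \<in> p} \<notin> q" using uf_props[OF P] uf_props[OF Q] by (simp add: e)
    show "{n. set_minus_nat UNIV n \<in> p} \<in> q" using uf_props[OF P] uf_props[OF Q] by (simp add: e)
  next
    fix A B assume A: "{n. set_minus_nat A n \<in> p} \<in> q" and AB: "A \<subseteq> B"
    have "{n. set_minus_nat A n \<in> p} \<subseteq> {n. set_minus_nat B n \<in> p}"
    proof
      fix n assume "n \<in> {n. set_minus_nat A n \<in> p}"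
      moreover have "set_minus_nat A n \<subseteq> set_minus_nat B n" using AB by auto
      ultimately show "n \<in> {n. set_minus_nat B n \<in> p}" using uf_props(3)[OF P] by auto
    qed
    then show "{n. set_minus_nat B n \<in> p} \<in> q" using A uf_props(3)[OF Q] by blast
  next
    fix A B assume A: "{n. set_minus_nat A n \<in> p} \<in> q" and B: "{n. set_minus_nat B n \<in> p} \<in> q"
    have "set_minus_nat (A \<inter> B) n = set_minus_nat A n \<inter> set_minus_nat B n" for n by auto
    then have "{n. set_minus_nat (A \<inter> B) n \<in> p} = {n. set_minus_nat A n \<in> p} \<inter> {n. set_minus_nat B n \<in> p}"
      using uf_props(3,4)[OF P] by auto
    then show "{n. set_minus_nat (A \<inter> B) n \<in> p} \<in> q" using A B uf_props(4)[OF Q] by simp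
  next
    fix A
    have "set_minus_nat (- A) n = - set_minus_nat A n" for n by auto
    then have "{n. set_minus_nat (- A) n \<in> p} = - {n. set_minus_nat A n \<in> p}"
      using uf_compl[OF P] by auto
    then show "{n. set_minus_nat A n \<in> p} \<in> q \<or> {n. set_minus_nat (- A) n \<in> p} \<in> q"
      using uf_props(5)[OF Q] by simp
  qed
  then show ?thesis by (simp add: betaN_def)
qed

definition closedB :: "nat set set set \<Rightarrow> bool" where
  "closedB C \<longleftrightarrow> C \<subseteq> betaN \<and> (\<forall>p\<in>betaN. p \<notin> C \<longrightarrow> (\<exists>A\<in>p. \<forall>q\<in>C. A \<notin> q))"

definition basicB :: "nat set \<Rightarrow> nat set set set" where
  "basicB A = {p\<in>betaN. A \<in> p}"

lemma closed_basic: "closedB (basicB A)"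
  unfolding closedB_def basicB_def
proof (intro conjI ballI impI)
  fix p assume "p \<in> betaN" "p \<notin> {p \<in> betaN. A \<in> p}"
  then have "- A \<in> p" using uf_compl[of p A] by (auto simp: betaN_def)
  moreover have "\<forall>q\<in>{p \<in> betaN. A \<in> p}. - A \<notin> q" using uf_compl by (auto simp: betaN_def)
  ultimately show "\<exists>B\<in>p. \<forall>q\<in>{p \<in> betaN. A \<in> p}. B \<notin> q" by blast
qed auto

lemma closed_Inter:
  assumes "\<C> \<noteq> {}" "\<forall>C\<in>\<C>. closedB C"
  shows "closedB (\<Inter>\<C>)"
  unfolding closedB_def
proof (intro conjI ballI impI)
  show "\<Inter>\<C> \<subseteq> betaN" using assms unfolding closedB_def by blast
next
  fix p assume p: "p \<in> betaN" "p \<notin> \<Inter>\<C>"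
  then obtain C where C: "C \<in> \<C>" "p \<notin> C" by auto
  then obtain A where "A \<in> p" "\<forall>q\<in>C. A \<notin> q" using assms(2) p(1) unfolding closedB_def by blast
  then show "\<exists>A\<in>p. \<forall>q\<in>\<Inter>\<C>. A \<notin> q" using C by blast
qed

lemma closed_Int: "closedB C \<Longrightarrow> closedB D \<Longrightarrow> closedB (C \<inter> D)"
  using closed_Inter[of "{C, D}"] by auto

lemma closed_betaN: "closedB betaN"
  unfolding closedB_def by auto

lemma compactB:
  assumes ne: "\<C> \<noteq> {}" and cl: "\<forall>C\<in>\<C>. closedB C"
    and fi: "\<And>\<D>. finite \<D> \<Longrightarrow> \<D> \<subseteq> \<C> \<Longrightarrow> \<D> \<noteq> {} \<Longrightarrow> \<Inter>\<D> \<noteq> {}"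
  shows "\<Inter>\<C> \<noteq> {}"
proof -
  define F where "F = {A. \<exists>C\<in>\<C>. \<forall>q\<in>C. A \<in> q}"
  have "fip F" unfolding fip_def
  proof (intro allI impI)
    fix S assume fS: "finite S" and SF: "S \<subseteq> F"
    show "\<Inter>S \<noteq> {}"
    proof (cases "S = {}")
      case True then show ?thesis by simp
    next
      case False
      from SF have "\<forall>A\<in>S. \<exists>C. C \<in> \<C> \<and> (\<forall>q\<in>C. A \<in> q)" unfolding F_def by blast
      then obtain g where g: "\<forall>A\<in>S. g A \<in> \<C> \<and> (\<forall>q\<in>g A. A \<in> q)" by metis
      have "\<Inter>(g ` S) \<noteq> {}" using fi[of "g ` S"] fS False g by auto
      then obtain q where q: "q \<in> \<Inter>(g ` S)" by auto
      moreover obtain A0 where "A0 \<in> S" using False by auto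
      ultimately have "q \<in> g A0" by auto
      moreover have "closedB (g A0)" using g cl \<open>A0 \<in> S\<close> by auto
      ultimately have "q \<in> betaN" unfolding closedB_def by auto
      then have U: "is_ultrafilter q" by (simp add: betaN_def)
      have "S \<subseteq> q" using q g by blast
      then have "\<Inter>S \<in> q" using uf_Inter[OF U fS] by simp
      then show ?thesis using uf_props(1)[OF U] by auto
    qed
  qed
  then obtain U where U: "is_ultrafilter U" "F \<subseteq> U" using fip_ultra by blast
  have "U \<in> C" if C: "C \<in> \<C>" for C
  proof (rule ccontr)
    assume "U \<notin> C"
    moreover have clC: "closedB C" using cl C by auto
    moreover have "U \<in> betaN" using U(1) by (simp add: betaN_def)
    ultimately obtain A where A: "A \<in> U" "\<forall>q\<in>C. A \<notin> q" unfolding closedB_def by blast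
    have "\<forall>q\<in>C. - A \<in> q"
    proof
      fix q assume "q \<in> C"
      then have "is_ultrafilter q" using clC unfolding closedB_def betaN_def by auto
      then show "- A \<in> q" using uf_compl A \<open>q \<in> C\<close> by auto
    qed
    then have "- A \<in> F" using C unfolding F_def by blast
    then have "- A \<in> U" using U(2) by auto
    then show False using uf_compl[OF U(1)] A(1) by auto
  qed
  then show ?thesis by blast
qed

lemma chain_fin_min:
  assumes "finite \<D>" "\<D> \<noteq> {}" "\<forall>X\<in>\<D>. \<forall>Y\<in>\<D>. X \<subseteq> Y \<or> Y \<subseteq> X"
  shows "\<exists>X\<in>\<D>. \<forall>Y\<in>\<D>. X \<subseteq> Y"
  using assms
proof (induction \<D> rule: finite_ne_induct)
  case (singleton x) then show ?case by simp
next
  case (insert x F)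
  have ch: "\<forall>X\<in>F. \<forall>Y\<in>F. X \<subseteq> Y \<or> Y \<subseteq> X" using insert.prems by simp
  obtain X where X: "X \<in> F" "\<forall>Y\<in>F. X \<subseteq> Y" using insert.IH[OF ch] by blast
  have xX: "x \<subseteq> X \<or> X \<subseteq> x" using insert.prems X(1) by simp
  show ?case
  proof (cases "x \<subseteq> X")
    case True
    then have "\<forall>Y\<in>insert x F. x \<subseteq> Y" using X(2) by blast
    then show ?thesis by blast
  next
    case False then have "X \<subseteq> x" using xX by simp
    then have "\<forall>Y\<in>insert x F. X \<subseteq> Y" using X(2) by blast
    then show ?thesis using X(1) by blast
  qed
qed

lemma compact_chain:
  assumes ne: "\<C> \<noteq> {}" and cl: "\<forall>C\<in>\<C>. closedB C \<and> C \<noteq> {}"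
    and ch: "\<forall>X\<in>\<C>. \<forall>Y\<in>\<C>. X \<subseteq> Y \<or> Y \<subseteq> X"
  shows "\<Inter>\<C> \<noteq> {}"
proof (rule compactB)
  show "\<forall>C\<in>\<C>. closedB C" using cl by simp
  show "\<C> \<noteq> {}" by (rule ne)
  fix \<D> assume D: "finite \<D>" "\<D> \<subseteq> \<C>" "\<D> \<noteq> {}"
  have chD: "\<forall>X\<in>\<D>. \<forall>Y\<in>\<D>. X \<subseteq> Y \<or> Y \<subseteq> X" using ch D(2) by blast
  obtain X where X: "X \<in> \<D>" "\<forall>Y\<in>\<D>. X \<subseteq> Y" using chain_fin_min[OF D(1,3) chD] by blast
  then have "X \<subseteq> \<Inter>\<D>" by blast
  moreover have "X \<noteq> {}" using cl X(1) D(2) by blast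
  ultimately show "\<Inter>\<D> \<noteq> {}" by blast
qed

lemma closed_image:
  assumes e: "e \<in> betaN" and M: "closedB M" "M \<noteq> {}"
  shows "closedB ((\<lambda>m. uf_plus e m) ` M)"
  unfolding closedB_def
proof (intro conjI ballI impI)
  show "(\<lambda>m. uf_plus e m) ` M \<subseteq> betaN" using uf_plus_closed e M(1) unfolding closedB_def by auto
next
  fix q assume q: "q \<in> betaN" "q \<notin> (\<lambda>m. uf_plus e m) ` M"
  have Q: "is_ultrafilter q" using q by (simp add: betaN_def)
  show "\<exists>A\<in>q. \<forall>m'\<in>(\<lambda>m. uf_plus e m) ` M. A \<notin> m'"
  proof (rule ccontr)
    assume "\<not> ?thesis"
    then have H: "\<forall>A\<in>q. \<exists>m\<in>M. A \<in> uf_plus e m" by auto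
    define C where "C A = M \<inter> basicB {n. set_minus_nat A n \<in> e}" for A
    have Cm: "m \<in> C A \<longleftrightarrow> m \<in> M \<and> A \<in> uf_plus e m" for m A
      using M(1) unfolding C_def basicB_def closedB_def uf_plus_def by auto
    have "\<Inter>(C ` q) \<noteq> {}"
    proof (rule compactB)
      show "C ` q \<noteq> {}" using uf_props(2)[OF Q] by auto
      show "\<forall>X\<in>C ` q. closedB X" unfolding C_def using closed_Int closed_basic M(1) by auto
    next
      fix \<D> assume D: "finite \<D>" "\<D> \<subseteq> C ` q" "\<D> \<noteq> {}"
      then obtain S where S: "S \<subseteq> q" "finite S" "\<D> = C ` S" by (meson finite_subset_image)
      then have "S \<noteq> {}" using D by auto
      have "\<Inter>S \<in> q" using uf_Inter[OF Q S(2,1)] .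
      then obtain m where m: "m \<in> M" "\<Inter>S \<in> uf_plus e m" using H by auto
      have mU: "is_ultrafilter (uf_plus e m)"
        using uf_plus_closed[OF e] m(1) M(1) unfolding closedB_def betaN_def by auto
      have "m \<in> C A" if "A \<in> S" for A
        using Cm m uf_props(3)[OF mU m(2)] that by auto
      then show "\<Inter>\<D> \<noteq> {}" using S by auto
    qed
    then obtain m where "m \<in> \<Inter>(C ` q)" by auto
    then have m: "m \<in> M" "q \<subseteq> uf_plus e m" using Cm uf_props(2)[OF Q] by auto
    have mU: "is_ultrafilter (uf_plus e m)"
      using uf_plus_closed[OF e] m(1) M(1) unfolding closedB_def betaN_def by auto
    have "q = uf_plus e m" using uf_eq[OF Q mU m(2)] .
    then show False using q(2) m(1) by auto
  qed
qed

lemma ellis: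
  assumes T: "closedB T" "T \<noteq> {}" "\<forall>a\<in>T. \<forall>b\<in>T. uf_plus a b \<in> T"
  shows "\<exists>e\<in>T. uf_plus e e = e"
proof -
  define \<A> where "\<A> = {M. M \<subseteq> T \<and> M \<noteq> {} \<and> closedB M \<and> (\<forall>a\<in>M. \<forall>b\<in>M. uf_plus a b \<in> M)}"
  have "\<exists>M\<in>\<A>. \<forall>X\<in>\<A>. X \<subseteq> M \<longrightarrow> X = M"
  proof (rule Zorn_min)
    show "\<A> \<noteq> {}" using T unfolding \<A>_def by auto
  next
    fix \<C> assume C: "\<C> \<noteq> {}" "\<C> \<subseteq> \<A>" "\<forall>X\<in>\<C>. \<forall>Y\<in>\<C>. X \<subseteq> Y \<or> Y \<subseteq> X"
    have "\<Inter>\<C> \<noteq> {}" using compact_chain[of \<C>] C unfolding \<A>_def by auto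
    moreover have "closedB (\<Inter>\<C>)" using closed_Inter[of \<C>] C unfolding \<A>_def by auto
    moreover have "\<Inter>\<C> \<subseteq> T"
    proof -
      obtain X0 where "X0 \<in> \<C>" using C(1) by auto
      then show ?thesis using C(2) unfolding \<A>_def by blast
    qed
    moreover have "\<forall>a\<in>\<Inter>\<C>. \<forall>b\<in>\<Inter>\<C>. uf_plus a b \<in> \<Inter>\<C>" using C unfolding \<A>_def by auto
    ultimately show "\<Inter>\<C> \<in> \<A>" unfolding \<A>_def by auto
  qed
  then obtain M where M: "M \<subseteq> T" "M \<noteq> {}" "closedB M" "\<forall>a\<in>M. \<forall>b\<in>M. uf_plus a b \<in> M"
    and min: "\<And>X. X \<in> \<A> \<Longrightarrow> X \<subseteq> M \<Longrightarrow> X = M" unfolding \<A>_def by auto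
  obtain e where eM: "e \<in> M" using M(2) by auto
  have eB: "e \<in> betaN" using eM M(3) unfolding closedB_def by auto
  have MB: "M \<subseteq> betaN" using M(3) unfolding closedB_def by auto
  have "(\<lambda>m. uf_plus e m) ` M \<in> \<A>" unfolding \<A>_def
  proof (intro CollectI conjI)
    show "(\<lambda>m. uf_plus e m) ` M \<subseteq> T" using M eM by auto
    show "(\<lambda>m. uf_plus e m) ` M \<noteq> {}" using M by auto
    show "closedB ((\<lambda>m. uf_plus e m) ` M)" using closed_image[OF eB M(3,2)] .
    show "\<forall>a\<in>(\<lambda>m. uf_plus e m) ` M. \<forall>b\<in>(\<lambda>m. uf_plus e m) ` M. uf_plus a b \<in> (\<lambda>m. uf_plus e m) ` M"
    proof (intro ballI)
      fix a b assume "a \<in> (\<lambda>m. uf_plus e m) ` M" "b \<in> (\<lambda>m. uf_plus e m) ` M"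
      then obtain a' b' where "a' \<in> M" "b' \<in> M" "a = uf_plus e a'" "b = uf_plus e b'" by auto
      then have "uf_plus a b = uf_plus e (uf_plus a' (uf_plus e b'))" "uf_plus a' (uf_plus e b') \<in> M"
        using uf_plus_assoc M(4) eM by auto
      then show "uf_plus a b \<in> (\<lambda>m. uf_plus e m) ` M" by auto
    qed
  qed
  moreover have "(\<lambda>m. uf_plus e m) ` M \<subseteq> M" using M(4) eM by auto
  ultimately have eMM: "(\<lambda>m. uf_plus e m) ` M = M" using min by blast
  define S where "S = {m \<in> M. uf_plus e m = e}"
  have S_eq: "S = M \<inter> \<Inter>((\<lambda>A. basicB {n. set_minus_nat A n \<in> e}) ` e)"
  proof (intro set_eqI iffI)
    fix m assume "m \<in> S"
    then show "m \<in> M \<inter> \<Inter>((\<lambda>A. basicB {n. set_minus_nat A n \<in> e}) ` e)"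
      using MB unfolding S_def basicB_def uf_plus_def by auto
  next
    fix m assume m: "m \<in> M \<inter> \<Inter>((\<lambda>A. basicB {n. set_minus_nat A n \<in> e}) ` e)"
    then have "e \<subseteq> uf_plus e m" unfolding basicB_def uf_plus_def by auto
    moreover have "is_ultrafilter (uf_plus e m)" using uf_plus_closed[OF eB] m MB by (auto simp: betaN_def)
    moreover have "is_ultrafilter e" using eB by (simp add: betaN_def)
    ultimately show "m \<in> S" using uf_eq m unfolding S_def by auto
  qed
  have "S \<in> \<A>" unfolding \<A>_def
  proof (intro CollectI conjI)
    show "S \<subseteq> T" using M(1) unfolding S_def by auto
    have "e \<in> (\<lambda>m. uf_plus e m) ` M" using eMM eM by simp
    then obtain m where "m \<in> M" "e = uf_plus e m" by blast
    then show "S \<noteq> {}" unfolding S_def by blast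
    have "e \<noteq> {}" using eB uf_props(2) by (auto simp: betaN_def)
    then show "closedB S" unfolding S_eq
      by (intro closed_Int M(3) closed_Inter) (auto intro: closed_basic)
    show "\<forall>a\<in>S. \<forall>b\<in>S. uf_plus a b \<in> S"
    proof (intro ballI)
      fix a b assume ab: "a \<in> S" "b \<in> S"
      then have "uf_plus a b \<in> M" using M(4) unfolding S_def by simp
      moreover have "uf_plus e (uf_plus a b) = e"
        using ab uf_plus_assoc[of e a b] unfolding S_def by simp
      ultimately show "uf_plus a b \<in> S" unfolding S_def by simp
    qed
  qed
  moreover have "S \<subseteq> M" unfolding S_def by auto
  ultimately have "S = M" using min by blast
  then have "uf_plus e e = e" using eM unfolding S_def by auto
  then show ?thesis using eM M(1) by auto
qed

lemma principal_uf_betaN: "principal_uf n \<in> betaN"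
  unfolding betaN_def is_ultrafilter_def principal_uf_def by auto

lemma singleton_principal:
  assumes U: "is_ultrafilter p" and x: "{x} \<in> p" shows "p = principal_uf x"
proof (intro set_eqI iffI)
  fix C assume C: "C \<in> p"
  show "C \<in> principal_uf x"
  proof (rule ccontr)
    assume "C \<notin> principal_uf x"
    then have "C \<inter> {x} = {}" by (auto simp: principal_uf_def)
    moreover have "C \<inter> {x} \<in> p" using uf_props(4)[OF U C x] .
    ultimately show False using uf_props(1)[OF U] by simp
  qed
next
  fix C assume "C \<in> principal_uf x"
  then have "{x} \<subseteq> C" by (auto simp: principal_uf_def)
  then show "C \<in> p" using uf_props(3)[OF U x] by blast
qed

lemma nonprincipal_finite:
  assumes U: "is_ultrafilter p" and np: "\<forall>n. p \<noteq> principal_uf n" and fin: "finite A"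
  shows "A \<notin> p"
  using fin
proof (induction A rule: finite_induct)
  case empty show ?case using uf_props(1)[OF U] .
next
  case (insert x B)
  show ?case
  proof
    assume xB: "insert x B \<in> p"
    have "{x} \<notin> p" using singleton_principal[OF U] np by blast
    then have "-{x} \<in> p" using uf_props(5)[OF U] by blast
    then have "insert x B \<inter> -{x} \<in> p" using uf_props(4)[OF U xB] by blast
    moreover have "insert x B \<inter> -{x} \<subseteq> B" by blast
    ultimately have "B \<in> p" using uf_props(3)[OF U] by blast
    then show False using insert.IH by blast
  qed
qed

definition Nstar :: "nat set set set" where "Nstar = {p \<in> betaN. \<forall>n. p \<noteq> principal_uf n}"

lemma Nstar_ne: "Nstar \<noteq> {}"
proof -
  have "fip {A. finite (-A)}" unfolding fip_def
  proof (intro allI impI)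
    fix S :: "nat set set" assume S: "finite S" "S \<subseteq> {A. finite (- A)}"
    have "- \<Inter>S = \<Union>(uminus ` S)" by auto
    moreover have "finite (\<Union>(uminus ` S))" using S by auto
    ultimately have "finite (- \<Inter>S)" by simp
    show "\<Inter>S \<noteq> {}"
    proof
      assume "\<Inter>S = {}"
      then show False using \<open>finite (- \<Inter>S)\<close> by simp
    qed
  qed
  then obtain U where U: "is_ultrafilter U" "{A. finite (-A)} \<subseteq> U" using fip_ultra by blast
  have "U \<noteq> principal_uf n" for n
  proof
    assume "U = principal_uf n"
    moreover have "-{n} \<in> U" using U(2) by auto
    ultimately show False by (simp add: principal_uf_def)
  qed
  then show ?thesis using U unfolding Nstar_def betaN_def by auto
qed

lemma Nstar_ideal: "two_sided_ideal Nstar"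
  unfolding two_sided_ideal_def
proof (intro conjI ballI)
  show "Nstar \<noteq> {}" by (rule Nstar_ne)
  show "Nstar \<subseteq> betaN" unfolding Nstar_def by auto
next
  fix p q assume p: "p \<in> betaN" and q: "q \<in> Nstar"
  have P: "is_ultrafilter p" using p by (simp add: betaN_def)
  have Q: "is_ultrafilter q" "\<forall>n. q \<noteq> principal_uf n" using q by (auto simp: Nstar_def betaN_def)
  have qB: "q \<in> betaN" using q by (simp add: Nstar_def)
  have fin: "finite (set_minus_nat {m} n)" for m n
  proof -
    have "set_minus_nat {m} n \<subseteq> {..m}" by auto
    then show ?thesis using finite_subset by blast
  qed
  show "uf_plus p q \<in> Nstar"
  proof -
    have "uf_plus p q \<noteq> principal_uf m" for m
    proof
      assume eq: "uf_plus p q = principal_uf m"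
      then have "{m} \<in> uf_plus p q" by (simp add: principal_uf_def)
      then have "{n. set_minus_nat {m} n \<in> p} \<in> q" by (simp add: uf_plus_iff)
      moreover have "{n. set_minus_nat {m} n \<in> p} \<subseteq> {..m}"
      proof
        fix n assume "n \<in> {n. set_minus_nat {m} n \<in> p}"
        then have "set_minus_nat {m} n \<noteq> {}" using uf_props(1)[OF P] by auto
        then obtain k where "k + n = m" by auto
        then show "n \<in> {..m}" by auto
      qed
      ultimately have "{..m} \<in> q" using uf_props(3)[OF Q(1)] by blast
      then show False using nonprincipal_finite[OF Q] by blast
    qed
    then show ?thesis using uf_plus_closed[OF p qB] unfolding Nstar_def by auto
  qed
  show "uf_plus q p \<in> Nstar"
  proof -
    have "uf_plus q p \<noteq> principal_uf m" for m
    proof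
      assume eq: "uf_plus q p = principal_uf m"
      then have "{m} \<in> uf_plus q p" by (simp add: principal_uf_def)
      then have "{n. set_minus_nat {m} n \<in> q} \<in> p" by (simp add: uf_plus_iff)
      moreover have "{n. set_minus_nat {m} n \<in> q} = {}" using nonprincipal_finite[OF Q fin] by auto
      ultimately show False using uf_props(1)[OF P] by simp
    qed
    then show ?thesis using uf_plus_closed[OF qB p] unfolding Nstar_def by auto
  qed
qed

definition rideal :: "nat set set set \<Rightarrow> bool" where
  "rideal R \<longleftrightarrow> R \<subseteq> betaN \<and> R \<noteq> {} \<and> (\<forall>p\<in>R. \<forall>q\<in>betaN. uf_plus p q \<in> R)"

lemma min_rideal: "\<exists>R. closedB R \<and> rideal R \<and> (\<forall>I. two_sided_ideal I \<longrightarrow> R \<subseteq> I)"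
proof -
  define \<A> where "\<A> = {R. closedB R \<and> rideal R}"
  have "\<exists>M\<in>\<A>. \<forall>X\<in>\<A>. X \<subseteq> M \<longrightarrow> X = M"
  proof (rule Zorn_min)
    have "betaN \<in> \<A>" unfolding \<A>_def rideal_def using closed_betaN principal_uf_betaN uf_plus_closed by blast
    then show "\<A> \<noteq> {}" by auto
  next
    fix \<C> assume C: "\<C> \<noteq> {}" "\<C> \<subseteq> \<A>" "\<forall>X\<in>\<C>. \<forall>Y\<in>\<C>. X \<subseteq> Y \<or> Y \<subseteq> X"
    have "\<forall>C\<in>\<C>. closedB C \<and> C \<noteq> {}" using C(2) unfolding \<A>_def rideal_def by blast
    then have ne: "\<Inter>\<C> \<noteq> {}" using compact_chain[OF C(1) _ C(3)] by blast
    have cl: "closedB (\<Inter>\<C>)" using closed_Inter[OF C(1)] C(2) unfolding \<A>_def by blast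
    have "rideal (\<Inter>\<C>)" unfolding rideal_def
    proof (intro conjI ballI)
      show "\<Inter>\<C> \<subseteq> betaN" using cl unfolding closedB_def by blast
      show "\<Inter>\<C> \<noteq> {}" by (rule ne)
      fix p q assume pq: "p \<in> \<Inter>\<C>" "q \<in> betaN"
      show "uf_plus p q \<in> \<Inter>\<C>"
      proof
        fix X assume "X \<in> \<C>"
        then have "rideal X" "p \<in> X" using C(2) pq unfolding \<A>_def by auto
        then show "uf_plus p q \<in> X" using pq(2) unfolding rideal_def by blast
      qed
    qed
    then show "\<Inter>\<C> \<in> \<A>" using cl unfolding \<A>_def by blast
  qed
  then obtain R where R: "closedB R" "rideal R" and min: "\<And>X. X \<in> \<A> \<Longrightarrow> X \<subseteq> R \<Longrightarrow> X = R"
    unfolding \<A>_def by blast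
  have "R \<subseteq> I" if I: "two_sided_ideal I" for I
  proof -
    obtain p where p: "p \<in> R" using R(2) unfolding rideal_def by blast
    obtain q where q: "q \<in> I" using I unfolding two_sided_ideal_def by blast
    have pB: "p \<in> betaN" using p R(2) unfolding rideal_def by blast
    have qB: "q \<in> betaN" using q I unfolding two_sided_ideal_def by blast
    define r where "r = uf_plus p q"
    have rR: "r \<in> R" using R(2) p qB unfolding rideal_def r_def by blast
    have rI: "r \<in> I" using I pB q unfolding two_sided_ideal_def r_def by blast
    have rB: "r \<in> betaN" using rR R(2) unfolding rideal_def by blast
    define X where "X = (\<lambda>s. uf_plus r s) ` betaN"
    have bne: "betaN \<noteq> {}" using principal_uf_betaN by blast
    have "X \<in> \<A>" unfolding \<A>_def rideal_def
    proof (intro CollectI conjI ballI)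
      show "closedB X" unfolding X_def using closed_image[OF rB closed_betaN bne] .
      show "X \<subseteq> betaN" unfolding X_def using uf_plus_closed[OF rB] by blast
      show "X \<noteq> {}" unfolding X_def using bne by blast
      fix a b assume ab: "a \<in> X" "b \<in> betaN"
      then obtain s where s: "s \<in> betaN" "a = uf_plus r s" unfolding X_def by blast
      then have "uf_plus a b = uf_plus r (uf_plus s b)" using uf_plus_assoc by simp
      moreover have "uf_plus s b \<in> betaN" using uf_plus_closed s(1) ab(2) by blast
      ultimately show "uf_plus a b \<in> X" unfolding X_def by blast
    qed
    moreover have "X \<subseteq> R" unfolding X_def using R(2) rR unfolding rideal_def by blast
    ultimately have "X = R" using min by blast
    moreover have "X \<subseteq> I" unfolding X_def using I rI unfolding two_sided_ideal_def by blast
    ultimately show ?thesis by blast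
  qed
  then show ?thesis using R by blast
qed

lemma UR_central:
  fixes y :: "nat \<Rightarrow> bool"
  assumes UR: "\<And>L. \<exists>g. \<forall>i. \<exists>j. i \<le> j \<and> j \<le> i + g \<and> (\<forall>t<L. y (j + t) = y t)"
    and y0: "y 0"
  shows "\<exists>e. minimal_idempotent e \<and> {n. y n} \<in> e"
proof -
  obtain R where R: "closedB R" "rideal R" "\<forall>I. two_sided_ideal I \<longrightarrow> R \<subseteq> I"
    using min_rideal by blast
  obtain p where p: "p \<in> R" using R(2) unfolding rideal_def by blast
  have pB: "p \<in> betaN" using p R(2) unfolding rideal_def by blast
  have P: "is_ultrafilter p" using pB by (simp add: betaN_def)
  define z where "z k = ({n. y (n + k)} \<in> p)" for k
  have zset: "{n. y (n + k) = v} \<in> p \<longleftrightarrow> z k = v" for k v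
  proof (cases v)
    case True then show ?thesis unfolding z_def by simp
  next
    case False
    have "{n. y (n + k) = v} = - {n. y (n + k)}" using False by auto
    then show ?thesis unfolding z_def using uf_compl[OF P] False by simp
  qed
  define B where "B L = {m. \<forall>t<L. z (m + t) = y t}" for L
  have Bne: "B L \<noteq> {}" for L
  proof -
    obtain g where g: "\<forall>i. \<exists>j. i \<le> j \<and> j \<le> i + g \<and> (\<forall>t<L. y (j + t) = y t)" using UR by blast
    define E where "E = \<Inter>((\<lambda>t. {n. y (n + t) = z t}) ` {..<g+L})"
    have "(\<lambda>t. {n. y (n + t) = z t}) ` {..<g+L} \<subseteq> p" using zset by auto
    then have "E \<in> p" unfolding E_def using uf_Inter[OF P] by blast
    then have "E \<noteq> {}" using uf_props(1)[OF P] by auto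
    then obtain n0 where n0: "n0 \<in> E" by auto
    obtain j where j: "n0 \<le> j" "j \<le> n0 + g" "\<forall>t<L. y (j + t) = y t" using g by blast
    have "j - n0 \<in> B L" unfolding B_def
    proof (intro CollectI allI impI)
      fix t assume t: "t < L"
      then have "j - n0 + t \<in> {..<g+L}" using j by auto
      then have "y (n0 + (j - n0 + t)) = z (j - n0 + t)" using n0 unfolding E_def by blast
      moreover have "n0 + (j - n0 + t) = j + t" using j by linarith
      ultimately show "z (j - n0 + t) = y t" using j(3) t by simp
    qed
    then show ?thesis by blast
  qed
  have fipB: "fip (range B)" unfolding fip_def
  proof (intro allI impI)
    fix S assume S: "finite S" "S \<subseteq> range B"
    then obtain Ls where Ls: "finite Ls" "S = B ` Ls" by (meson finite_subset_image)
    obtain N where N: "\<forall>L\<in>Ls. L \<le> N" using Ls(1) finite_nat_set_iff_bounded_le by blast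
    have "B N \<subseteq> \<Inter>S" using N unfolding Ls(2) B_def by auto
    then show "\<Inter>S \<noteq> {}" using Bne[of N] by blast
  qed
  obtain r where r: "is_ultrafilter r" "range B \<subseteq> r" using fip_ultra[OF fipB] by blast
  have rB: "r \<in> betaN" using r by (simp add: betaN_def)
  define Y where "Y = {t \<in> betaN. \<forall>k. {n. y (n + k) = y k} \<in> t}"
  define s where "s = uf_plus p r"
  have sR: "s \<in> R" using R(2) p rB unfolding rideal_def s_def by blast
  have sY: "s \<in> Y" unfolding Y_def
  proof (intro CollectI conjI allI)
    show "s \<in> betaN" unfolding s_def using uf_plus_closed[OF pB rB] .
    fix k
    have "B (Suc k) \<subseteq> {m. set_minus_nat {n. y (n + k) = y k} m \<in> p}"
    proof
      fix m assume "m \<in> B (Suc k)"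
      then have "z (m + k) = y k" unfolding B_def by simp
      then have "{n. y (n + (m + k)) = y k} \<in> p" using zset by simp
      moreover have "set_minus_nat {n. y (n + k) = y k} m = {n. y (n + (m + k)) = y k}"
        by (auto simp: set_minus_nat_def add.assoc)
      ultimately show "m \<in> {m. set_minus_nat {n. y (n + k) = y k} m \<in> p}" by simp
    qed
    moreover have "B (Suc k) \<in> r" using r(2) by blast
    ultimately have "{m. set_minus_nat {n. y (n + k) = y k} m \<in> p} \<in> r" using uf_props(3)[OF r(1)] by blast
    then show "{n. y (n + k) = y k} \<in> s" unfolding s_def uf_plus_iff .
  qed
  have Y_eq: "Y = \<Inter>(range (\<lambda>k. basicB {n. y (n + k) = y k}))"
    unfolding Y_def basicB_def by auto
  have Ycl: "closedB Y" unfolding Y_eq by (rule closed_Inter) (auto intro: closed_basic)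
  have Ysg: "uf_plus a b \<in> Y" if a: "a \<in> Y" and b: "b \<in> Y" for a b
  proof -
    have aB: "a \<in> betaN" "b \<in> betaN" using a b unfolding Y_def by auto
    show "uf_plus a b \<in> Y" unfolding Y_def
    proof (intro CollectI conjI allI)
      show "uf_plus a b \<in> betaN" using uf_plus_closed aB by blast
      fix k
      have "{m. y (m + k) = y k} \<subseteq> {m. set_minus_nat {n. y (n + k) = y k} m \<in> a}"
      proof
        fix m assume "m \<in> {m. y (m + k) = y k}"
        then have e: "y (m + k) = y k" by simp
        have "{n. y (n + (m + k)) = y (m + k)} \<in> a" using a unfolding Y_def by blast
        moreover have "set_minus_nat {n. y (n + k) = y k} m = {n. y (n + (m + k)) = y (m + k)}"
          using e by (auto simp: set_minus_nat_def add.assoc)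
        ultimately show "m \<in> {m. set_minus_nat {n. y (n + k) = y k} m \<in> a}" by simp
      qed
      moreover have "{m. y (m + k) = y k} \<in> b" using b unfolding Y_def by blast
      moreover have "is_ultrafilter b" using aB by (simp add: betaN_def)
      ultimately show "{n. y (n + k) = y k} \<in> uf_plus a b" unfolding uf_plus_iff using uf_props(3) by blast
    qed
  qed
  define T where "T = R \<inter> Y"
  have Tcl: "closedB T" unfolding T_def using closed_Int R(1) Ycl by blast
  have Tne: "T \<noteq> {}" unfolding T_def using sR sY by blast
  have Tsg: "\<forall>a\<in>T. \<forall>b\<in>T. uf_plus a b \<in> T"
  proof (intro ballI)
    fix a b assume "a \<in> T" "b \<in> T"
    then have "a \<in> R" "b \<in> betaN" "a \<in> Y" "b \<in> Y" unfolding T_def Y_def by auto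
    then show "uf_plus a b \<in> T" unfolding T_def using Ysg R(2) unfolding rideal_def by blast
  qed
  obtain e where e: "e \<in> T" "uf_plus e e = e" using ellis[OF Tcl Tne Tsg] by blast
  have eK: "e \<in> K_betaN" unfolding K_betaN_def using e(1) R(3) unfolding T_def by blast
  have eN: "e \<in> Nstar" using eK Nstar_ideal unfolding K_betaN_def by blast
  have "minimal_idempotent e" unfolding minimal_idempotent_def using eN e(2) eK unfolding Nstar_def by blast
  moreover have "{n. y n} \<in> e"
  proof -
    have "{n. y (n + 0) = y 0} \<in> e" using e(1) unfolding T_def Y_def by blast
    then show ?thesis using y0 by simp
  qed
  ultimately show ?thesis by blast
qed

fun PP :: "(nat \<Rightarrow> 'a) \<Rightarrow> nat \<Rightarrow> 'a list" where
  "PP D 0 = []"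
| "PP D (Suc n) = pal_closure (PP D n @ [D n])"

lemma pal_closure_props:
  shows "is_pal (pal_closure w)" "prefix w (pal_closure w)"
    and "is_pal p \<Longrightarrow> prefix w p \<Longrightarrow> length (pal_closure w) \<le> length p"
proof -
  let ?P = "\<lambda>p. is_pal p \<and> prefix w p"
  have "?P (w @ rev w)" by (simp add: is_pal_def)
  from arg_min_nat_lemma[of ?P, OF this, of length]
  have "?P (pal_closure w)" "\<forall>y. ?P y \<longrightarrow> length (pal_closure w) \<le> length y"
    unfolding pal_closure_def by auto
  then show "is_pal (pal_closure w)" "prefix w (pal_closure w)"
    and "is_pal p \<Longrightarrow> prefix w p \<Longrightarrow> length (pal_closure w) \<le> length p" by auto
qed

lemma pal_closure_len: "length (pal_closure w) \<le> 2 * length w"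
proof -
  have "length (pal_closure w) \<le> length (w @ rev w)"
    by (rule pal_closure_props(3)) (auto simp: is_pal_def)
  then show ?thesis by simp
qed

lemma pal_closure_set: "set (pal_closure w) \<subseteq> set w"
proof -
  define p where "p = pal_closure w"
  obtain v where v: "p = w @ v" using pal_closure_props(2)[of w] unfolding p_def prefix_def by blast
  have lv: "length v \<le> length w" using pal_closure_len[of w] v unfolding p_def by simp
  have "rev p = p" using pal_closure_props(1)[of w] unfolding p_def is_pal_def by simp
  then have "rev v @ rev w = w @ v" using v by simp
  then have "take (length v) (rev v @ rev w) = take (length v) (w @ v)" by simp
  then have "rev v = take (length v) w" using lv by simp
  then have "set v \<subseteq> set w" by (metis set_rev set_take_subset)
  then show ?thesis using v unfolding p_def by auto
qed

lemma PP_pal: "is_pal (PP D n)"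
proof (cases n)
  case 0 then show ?thesis by (simp add: is_pal_def)
next
  case (Suc m) then show ?thesis using pal_closure_props(1) by simp
qed

lemma PP_prefix_step: "prefix (PP D n @ [D n]) (PP D (Suc n))"
  by (simp add: pal_closure_props(2))

lemma PP_len_step: "length (PP D (Suc n)) \<le> 2 * length (PP D n) + 1"
proof -
  have "is_pal (PP D n @ [D n] @ PP D n)" using PP_pal[of D n] by (simp add: is_pal_def)
  then have "length (pal_closure (PP D n @ [D n])) \<le> length (PP D n @ [D n] @ PP D n)"
    by (rule pal_closure_props(3)) simp
  then show ?thesis by simp
qed

lemma PP_len_ge_step: "length (PP D (Suc n)) \<ge> Suc (length (PP D n))"
  using prefix_length_le[OF PP_prefix_step[of D n]] by simp

lemma PP_len_ge: "length (PP D n) \<ge> n"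
proof (induction n)
  case (Suc n) then show ?case using PP_len_ge_step[of D n] by simp
qed simp

lemma PP_prefix1: "prefix (PP D m) (PP D (Suc m))"
proof -
  have "prefix (PP D m) (PP D m @ [D m])" by (rule prefixI) (rule refl)
  then show ?thesis using PP_prefix_step[of D m] by (rule prefix_order.order_trans)
qed

lemma PP_prefix: "n \<le> m \<Longrightarrow> prefix (PP D n) (PP D m)"
proof (induction m rule: dec_induct)
  case (step m)
  show ?case using step.IH PP_prefix1[of D m] by (rule prefix_order.order_trans)
qed simp

lemma PP_set: "set (PP D n) \<subseteq> D ` {..<n}"
proof (induction n)
  case (Suc n)
  have "set (PP D (Suc n)) \<subseteq> set (PP D n @ [D n])" using pal_closure_set[of "PP D n @ [D n]"] by simp
  also have "\<dots> \<subseteq> D ` {..<Suc n}" using Suc.IH by auto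
  finally show ?case .
qed simp

lemma pal_prefix_suffix: "is_pal q \<Longrightarrow> is_pal p \<Longrightarrow> prefix q p \<Longrightarrow> suffix q p"
  by (simp add: suffix_to_prefix is_pal_def)

lemma prefix_nth: "prefix u w \<Longrightarrow> t < length u \<Longrightarrow> w ! t = u ! t"
  by (auto simp: prefix_def nth_append)

lemma suffix_nth: "suffix u w \<Longrightarrow> t < length u \<Longrightarrow> w ! (length w - length u + t) = u ! t"
  by (auto simp: suffix_def nth_append)

definition occ_at :: "'a list \<Rightarrow> 'a list \<Rightarrow> nat \<Rightarrow> bool" where
  "occ_at u w j \<longleftrightarrow> j + length u \<le> length w \<and> (\<forall>t<length u. w ! (j + t) = u ! t)"

lemma gap:
  assumes "n \<le> k"
  shows "\<forall>i. i + length (PP D n) \<le> length (PP D k) \<longrightarrow>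
      (\<exists>j. i \<le> j \<and> j \<le> i + length (PP D n) \<and> occ_at (PP D n) (PP D k) j)"
  using assms
proof (induction k rule: dec_induct)
  case base
  show ?case
  proof (intro allI impI)
    fix i assume "i + length (PP D n) \<le> length (PP D n)"
    then have "i = 0" by simp
    then show "\<exists>j. i \<le> j \<and> j \<le> i + length (PP D n) \<and> occ_at (PP D n) (PP D n) j"
      by (intro exI[of _ 0]) (simp add: occ_at_def)
  qed
next
  case (step k)
  define Q where "Q = PP D n"
  define A where "A = PP D k"
  define B where "B = PP D (Suc k)"
  define s where "s = length B - length A"
  have pAB: "prefix A B" unfolding A_def B_def using PP_prefix[of k "Suc k" D] by simp
  have sAB: "suffix A B" unfolding A_def B_def using pal_prefix_suffix[OF PP_pal PP_pal pAB[unfolded A_def B_def]] .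
  have lB: "length B \<le> 2 * length A + 1" unfolding A_def B_def by (rule PP_len_step)
  have lAB: "length A \<le> length B" using prefix_length_le[OF pAB] .
  have pQA: "prefix Q A" unfolding Q_def A_def using step.hyps(1) by (rule PP_prefix)
  have lQA: "length Q \<le> length A" using prefix_length_le[OF pQA] .
  have IH: "\<And>i. i + length Q \<le> length A \<Longrightarrow> \<exists>j. i \<le> j \<and> j \<le> i + length Q \<and> occ_at Q A j"
    using step.IH unfolding Q_def A_def by blast
  have toB1: "occ_at Q B j" if o1: "occ_at Q A j" for j
  proof -
    have j1: "j + length Q \<le> length A" using o1 unfolding occ_at_def by simp
    have "B ! (j + t) = Q ! t" if t: "t < length Q" for t
    proof -
      have "j + t < length A" using t j1 by simp
      then have "B ! (j + t) = A ! (j + t)" by (rule prefix_nth[OF pAB])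
      then show ?thesis using o1 t unfolding occ_at_def by simp
    qed
    then show ?thesis using j1 lAB unfolding occ_at_def by simp
  qed
  have toB2: "occ_at Q B (s + j)" if o: "occ_at Q A j" for j
  proof -
    have "j + length Q \<le> length A" using o unfolding occ_at_def by simp
    then have 1: "s + j + length Q \<le> length B" unfolding s_def using lAB by simp
    have "B ! (s + j + t) = Q ! t" if t: "t < length Q" for t
    proof -
      have "j + t < length A" using t \<open>j + length Q \<le> length A\<close> by simp
      then have "B ! (s + (j + t)) = A ! (j + t)" using suffix_nth[OF sAB] unfolding s_def by blast
      then show ?thesis using o t unfolding occ_at_def by (simp add: add.assoc)
    qed
    then show ?thesis using 1 unfolding occ_at_def by simp
  qed
  have o0: "occ_at Q A 0" using prefix_nth[OF pQA] lQA unfolding occ_at_def by simp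
  show ?case unfolding Q_def[symmetric] B_def[symmetric]
  proof (intro allI impI)
    fix i assume i: "i + length Q \<le> length B"
    show "\<exists>j. i \<le> j \<and> j \<le> i + length Q \<and> occ_at Q B j"
    proof (cases "i + length Q \<le> length A")
      case True
      then obtain j where "i \<le> j" "j \<le> i + length Q" "occ_at Q A j" using IH by blast
      then show ?thesis using toB1 by blast
    next
      case False
      show ?thesis
      proof (cases "s \<le> i")
        case True
        have "i - s + length Q \<le> length A" using i True unfolding s_def by simp
        then obtain j where j: "i - s \<le> j" "j \<le> i - s + length Q" "occ_at Q A j" using IH by blast
        then have "i \<le> s + j" "s + j \<le> i + length Q" using True by simp_all
        then show ?thesis using toB2[OF j(3)] by blast
      next
        case F2: False
        have "s \<le> i + length Q" using False lB unfolding s_def by simp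
        then show ?thesis using toB2[OF o0] F2 by (intro exI[of _ s]) simp
      qed
    qed
  qed
qed

lemma psi_fin_PP: "psi_fin (map D [0..<n]) = PP D n"
  by (induction n) (simp_all add: psi_fin_def)

lemma psi_inf_nth:
  assumes k: "k < length (PP D N)"
  shows "psi_inf D k = PP D N ! k"
proof -
  have ev: "\<forall>\<^sub>F n in sequentially. k < length (PP D (Suc n)) \<and> PP D (Suc n) ! k = PP D N ! k"
  proof (rule eventually_sequentiallyI[of N])
    fix n assume "N \<le> n"
    then have "prefix (PP D N) (PP D (Suc n))" by (intro PP_prefix) simp
    then show "k < length (PP D (Suc n)) \<and> PP D (Suc n) ! k = PP D N ! k"
      using k prefix_nth[of "PP D N" "PP D (Suc n)" k] prefix_length_le[of "PP D N" "PP D (Suc n)"] by simp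
  qed
  show ?thesis unfolding psi_inf_def psi_fin_PP
  proof (rule the_equality)
    show "\<forall>\<^sub>F n in sequentially. k < length (PP D (Suc n)) \<and> PP D (Suc n) ! k = PP D N ! k" by (rule ev)
  next
    fix c assume "\<forall>\<^sub>F n in sequentially. k < length (PP D (Suc n)) \<and> PP D (Suc n) ! k = c"
    with ev have "\<forall>\<^sub>F n in sequentially. c = PP D N ! k" by eventually_elim auto
    then show "c = PP D N ! k" by simp
  qed
qed

lemma omega_occ:
  "\<exists>q0. i \<le> q0 \<and> q0 \<le> i + length (PP D n) \<and> (\<forall>t<length (PP D n). psi_inf D (q0 + t) = PP D n ! t)"
proof -
  define k where "k = n + i + length (PP D n)"
  have "i + length (PP D n) \<le> length (PP D k)" using PP_len_ge[of k D] unfolding k_def by simp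
  then obtain j where j: "i \<le> j" "j \<le> i + length (PP D n)" "occ_at (PP D n) (PP D k) j"
    using gap[of n k D] unfolding k_def by auto
  have "psi_inf D (j + t) = PP D n ! t" if t: "t < length (PP D n)" for t
  proof -
    have "j + t < length (PP D k)" using j(3) t unfolding occ_at_def by simp
    then have "psi_inf D (j + t) = PP D k ! (j + t)" by (rule psi_inf_nth)
    then show ?thesis using j(3) t unfolding occ_at_def by simp
  qed
  then show ?thesis using j by blast
qed

lemma omega_letter: "psi_inf D k \<in> range D"
proof -
  have "k < length (PP D (Suc k))" using PP_len_ge[of "Suc k" D] by simp
  then have "psi_inf D k = PP D (Suc k) ! k" by (rule psi_inf_nth)
  moreover have "PP D (Suc k) ! k \<in> set (PP D (Suc k))" using \<open>k < length (PP D (Suc k))\<close> by simp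
  ultimately show ?thesis using PP_set[of D "Suc k"] by auto
qed

lemma omega_has: "psi_inf D (length (PP D n)) = D n"
proof -
  have p: "prefix (PP D n @ [D n]) (PP D (Suc n))" by (rule PP_prefix_step)
  have "length (PP D n) < length (PP D (Suc n))" using PP_len_ge_step[of D n] by simp
  then have "psi_inf D (length (PP D n)) = PP D (Suc n) ! length (PP D n)" by (rule psi_inf_nth)
  also have "\<dots> = (PP D n @ [D n]) ! length (PP D n)" using prefix_nth[OF p] by simp
  finally show ?thesis by simp
qed

lemma UR_word:
  assumes inf: "infinite {n. D n = a}"
  shows "\<exists>g. \<forall>i. \<exists>j. i \<le> j \<and> j \<le> i + g \<and>
     (\<forall>t<L. prepend a (psi_inf D) (j + t) = prepend a (psi_inf D) t)"
proof -
  obtain n where n: "L \<le> n" "D n = a" using inf unfolding infinite_nat_iff_unbounded_le by blast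
  define W where "W = PP D (Suc n)"
  define c where "c = length W - length (PP D n) - 1"
  have pW: "prefix (PP D n @ [a]) W" unfolding W_def using PP_prefix_step[of D n] n(2) by simp
  have "suffix (rev (PP D n @ [a])) W"
    using pW PP_pal[of D "Suc n"] unfolding W_def suffix_to_prefix is_pal_def by simp
  then have sW: "suffix (a # PP D n) W" using PP_pal[of D n] unfolding is_pal_def by simp
  have lW: "length W \<ge> length (PP D n) + 1" using prefix_length_le[OF pW] by simp
  have cW: "length W - length (a # PP D n) = c" unfolding c_def by simp
  have Wa: "W ! c = a" using suffix_nth[OF sW, of 0] cW by simp
  have Wt: "W ! (c + 1 + t) = PP D n ! t" if "t < length (PP D n)" for t
    using suffix_nth[OF sW, of "Suc t"] cW that by simp
  have Ln: "L \<le> length (PP D n)" using n(1) PP_len_ge[of n D] by simp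
  have "\<forall>i. \<exists>j. i \<le> j \<and> j \<le> i + (length W + c + 1) \<and>
     (\<forall>t<L. prepend a (psi_inf D) (j + t) = prepend a (psi_inf D) t)"
  proof
    fix i
    obtain q0 where o: "i \<le> q0" "q0 \<le> i + length W" "\<forall>t<length W. psi_inf D (q0 + t) = W ! t"
      using omega_occ[of i D "Suc n"] unfolding W_def by blast
    have "prepend a (psi_inf D) (q0 + c + 1 + t) = prepend a (psi_inf D) t" if t: "t < L" for t
    proof (cases t)
      case 0
      have "c < length W" using lW unfolding c_def by simp
      then have "psi_inf D (q0 + c) = a" using o(3) Wa by simp
      then show ?thesis using 0 by (simp add: prepend_def)
    next
      case (Suc t')
      have t': "t' < length (PP D n)" using t Suc Ln by simp
      have "c + 1 + t' < length W" using t' lW unfolding c_def by simp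
      then have "psi_inf D (q0 + (c + 1 + t')) = W ! (c + 1 + t')" using o(3) by blast
      then have "psi_inf D (q0 + (c + 1 + t')) = PP D n ! t'" using Wt[OF t'] by simp
      moreover have "psi_inf D t' = PP D n ! t'" using t' by (rule psi_inf_nth)
      ultimately show ?thesis using Suc by (simp add: prepend_def add.assoc)
    qed
    then show "\<exists>j. i \<le> j \<and> j \<le> i + (length W + c + 1) \<and>
     (\<forall>t<L. prepend a (psi_inf D) (j + t) = prepend a (psi_inf D) t)"
      using o by (intro exI[of _ "q0 + c + 1"]) auto
  qed
  then show ?thesis by blast
qed

lemma shift_occ: "(\<lambda>b. b + 1) ` occ x a = occ (prepend a x) a \<inter> - {0}"
proof (intro set_eqI iffI)
  fix m assume "m \<in> (\<lambda>b. b + 1) ` occ x a"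
  then show "m \<in> occ (prepend a x) a \<inter> - {0}" by (auto simp: occ_def prepend_def)
next
  fix m assume m: "m \<in> occ (prepend a x) a \<inter> - {0}"
  then obtain k where k: "m = Suc k" by (cases m) auto
  then have "x k = a" using m by (simp add: occ_def prepend_def)
  then show "m \<in> (\<lambda>b. b + 1) ` occ x a" using k by (auto simp: occ_def)
qed

theorem mainTheorem19:
  fixes Alph :: "'a set" and D :: "nat \<Rightarrow> 'a"
  assumes "infinite Alph"
    and "\<And>n. D n \<in> Alph"
    and "\<And>a. a \<in> Alph \<Longrightarrow> infinite {n. D n = a}"
  shows "(\<forall>a\<in>Alph. central (occ (prepend a (psi_inf D)) a))
    \<and> (\<Union>a\<in>Alph. (\<lambda>b. b + 1) ` occ (psi_inf D) a) = {0<..}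
    \<and> (\<forall>a\<in>Alph. \<forall>b\<in>Alph. a \<noteq> b \<longrightarrow>
          (\<lambda>b. b + 1) ` occ (psi_inf D) a \<inter> (\<lambda>b. b + 1) ` occ (psi_inf D) b = {})
    \<and> (\<forall>a\<in>Alph. (\<lambda>b. b + 1) ` occ (psi_inf D) a \<noteq> {})
    \<and> infinite ((\<lambda>a. (\<lambda>b. b + 1) ` occ (psi_inf D) a) ` Alph)
    \<and> (\<forall>a\<in>Alph. central ((\<lambda>b. b + 1) ` occ (psi_inf D) a))"
proof -
  define \<omega> where "\<omega> = psi_inf D"
  define S where "S a = (\<lambda>b. b + 1) ` occ \<omega> a" for a
  have ex: "\<exists>e. minimal_idempotent e \<and> occ (prepend a \<omega>) a \<in> e" if a: "a \<in> Alph" for a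
  proof -
    let ?y = "\<lambda>m. prepend a \<omega> m = a"
    have UR: "\<exists>g. \<forall>i. \<exists>j. i \<le> j \<and> j \<le> i + g \<and> (\<forall>t<L. ?y (j + t) = ?y t)" for L
    proof -
      obtain g where g: "\<forall>i. \<exists>j. i \<le> j \<and> j \<le> i + g \<and>
          (\<forall>t<L. prepend a (psi_inf D) (j + t) = prepend a (psi_inf D) t)"
        using UR_word[OF assms(3)[OF a], of L] by blast
      show ?thesis unfolding \<omega>_def using g by metis
    qed
    have "?y 0" by (simp add: prepend_def)
    from UR_central[of ?y, OF UR this] show ?thesis unfolding occ_def by simp
  qed
  have c1: "\<forall>a\<in>Alph. central (occ (prepend a \<omega>) a)"
    using ex unfolding central_def by blast
  have c6: "\<forall>a\<in>Alph. central (S a)"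
  proof
    fix a assume a: "a \<in> Alph"
    obtain e where e: "minimal_idempotent e" "occ (prepend a \<omega>) a \<in> e" using ex[OF a] by blast
    have U: "is_ultrafilter e" "\<forall>n. e \<noteq> principal_uf n" using e(1) unfolding minimal_idempotent_def betaN_def by auto
    have "{0} \<notin> e" using nonprincipal_finite[OF U] by blast
    then have "- {0} \<in> e" using uf_props(5)[OF U(1)] by blast
    then have "occ (prepend a \<omega>) a \<inter> - {0} \<in> e" using uf_props(4)[OF U(1) e(2)] by blast
    then show "central (S a)" unfolding S_def shift_occ central_def using e(1) by blast
  qed
  have letters: "\<omega> k \<in> Alph" for k
  proof -
    obtain n where "psi_inf D k = D n" using omega_letter[of D k] by blast
    then show ?thesis using assms(2)[of n] unfolding \<omega>_def by simp
  qed
  have c2: "(\<Union>a\<in>Alph. S a) = {0<..}"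
  proof (intro set_eqI iffI)
    fix m assume "m \<in> (\<Union>a\<in>Alph. S a)"
    then show "m \<in> {0<..}" unfolding S_def by auto
  next
    fix m :: nat assume "m \<in> {0<..}"
    then obtain k where k: "m = Suc k" by (cases m) auto
    then have "m \<in> S (\<omega> k)" unfolding S_def occ_def by auto
    then show "m \<in> (\<Union>a\<in>Alph. S a)" using letters[of k] by blast
  qed
  have c3: "\<forall>a\<in>Alph. \<forall>b\<in>Alph. a \<noteq> b \<longrightarrow> S a \<inter> S b = {}"
    unfolding S_def occ_def by auto
  have c4: "\<forall>a\<in>Alph. S a \<noteq> {}"
  proof
    fix a assume a: "a \<in> Alph"
    have "{n. D n = a} \<noteq> {}" using assms(3)[OF a] by (metis finite.emptyI)
    then obtain n where "D n = a" by auto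
    then have "\<omega> (length (PP D n)) = a" using omega_has[of D n] unfolding \<omega>_def by simp
    then show "S a \<noteq> {}" unfolding S_def occ_def by auto
  qed
  have "inj_on S Alph"
  proof (rule inj_onI)
    fix a b assume ab: "a \<in> Alph" "b \<in> Alph" "S a = S b"
    show "a = b"
    proof (rule ccontr)
      assume "a \<noteq> b"
      then have "S a \<inter> S b = {}" using c3 ab by blast
      then show False using c4 ab by auto
    qed
  qed
  then have c5: "infinite (S ` Alph)" using assms(1) finite_imageD by blast
  show ?thesis using c1 c2 c3 c4 c5 c6 unfolding S_def \<omega>_def by blast
qed

end
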